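(* For the BDSSEP with parameters $0<\alpha\le\beta<1$ on $\Omega_N=\{0,1\}^{\{1,\dots,N-1\}}$, the mixing time satisfies $T^{\rm mix}_N\le \frac12 N^3$ for every $N\ge2$.
   Context: The BDSSEP is the continuous-time Markov chain on $\Omega_N$ with generator $$(L_Nf)(\eta)=\tfrac12\sum_{x=1}^{N-2}[f(\sigma^{x,x+1}\eta)-f(\eta)]+\tfrac12\{\alpha[1-\eta(1)]+(1-\alpha)\eta(1)\}[f(\sigma^1\eta)-f(\eta)]+\tfrac12\{\beta[1-\eta(N-1)]+(1-\beta)\eta(N-1)\}[f(\sigma^{N-1}\eta)-f(\eta)],$$ where $\sigma^{x,x+1}\eta$ exchanges $\eta(x),\eta(x+1)$ and $\sigma^x\eta$ flips $\eta(x)$; $\nu^N_{\alpha,\beta}$ is its stationary distribution. With $P_t(\eta,\xi)=\mathbb P_\eta[\eta(t)=\xi]$, $T^{\rm mix}_N=\inf\{t>0:\max_{\eta}\|P_t(\eta,\cdot)-\nu^N_{\alpha,\beta}\|_{\rm TV}\le1/4\}$. *)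

theory Defs
  imports Complex_Main
begin

text \<open>Configurations \<eta> \<in> {0,1}^{1..N-1} are encoded as the set of occupied sites,
  i.e. \<eta>(x) = 1 iff x \<in> \<eta>.\<close>

definition Omega :: "nat \<Rightarrow> nat set set" where
  "Omega N = Pow {1..N-1}"

definition occ :: "nat set \<Rightarrow> nat \<Rightarrow> real" where
  "occ \<eta> x = (if x \<in> \<eta> then 1 else 0)"

definition swap :: "nat \<Rightarrow> nat set \<Rightarrow> nat set" where
  "swap x \<eta> = {y. (y = x \<and> Suc x \<in> \<eta>) \<or> (y = Suc x \<and> x \<in> \<eta>) \<or> (y \<noteq> x \<and> y \<noteq> Suc x \<and> y \<in> \<eta>)}"

definition flip :: "nat \<Rightarrow> nat set \<Rightarrow> nat set" where
  "flip x \<eta> = (if x \<in> \<eta> then \<eta> - {x} else insert x \<eta>)"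

definition gen :: "nat \<Rightarrow> real \<Rightarrow> real \<Rightarrow> (nat set \<Rightarrow> real) \<Rightarrow> nat set \<Rightarrow> real" where
  "gen N \<alpha> \<beta> f \<eta> =
     1/2 * (\<Sum>x\<in>{1..N-2}. f (swap x \<eta>) - f \<eta>)
   + 1/2 * (\<alpha> * (1 - occ \<eta> 1) + (1 - \<alpha>) * occ \<eta> 1) * (f (flip 1 \<eta>) - f \<eta>)
   + 1/2 * (\<beta> * (1 - occ \<eta> (N-1)) + (1 - \<beta>) * occ \<eta> (N-1)) * (f (flip (N-1) \<eta>) - f \<eta>)"

definition Qmat :: "nat \<Rightarrow> real \<Rightarrow> real \<Rightarrow> nat set \<Rightarrow> nat set \<Rightarrow> real" where
  "Qmat N \<alpha> \<beta> \<eta> \<xi> = gen N \<alpha> \<beta> (\<lambda>\<zeta>. if \<zeta> = \<xi> then 1 else 0) \<eta>"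

fun Qpow :: "nat \<Rightarrow> real \<Rightarrow> real \<Rightarrow> nat \<Rightarrow> nat set \<Rightarrow> nat set \<Rightarrow> real" where
  "Qpow N \<alpha> \<beta> 0 \<eta> \<xi> = (if \<eta> = \<xi> then 1 else 0)"
| "Qpow N \<alpha> \<beta> (Suc k) \<eta> \<xi> = (\<Sum>\<zeta>\<in>Omega N. Qmat N \<alpha> \<beta> \<eta> \<zeta> * Qpow N \<alpha> \<beta> k \<zeta> \<xi>)"

definition Pt :: "nat \<Rightarrow> real \<Rightarrow> real \<Rightarrow> real \<Rightarrow> nat set \<Rightarrow> nat set \<Rightarrow> real" where
  "Pt N \<alpha> \<beta> t \<eta> \<xi> = (\<Sum>k. t ^ k / fact k * Qpow N \<alpha> \<beta> k \<eta> \<xi>)"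

definition stationary :: "nat \<Rightarrow> real \<Rightarrow> real \<Rightarrow> (nat set \<Rightarrow> real) \<Rightarrow> bool" where
  "stationary N \<alpha> \<beta> \<nu> \<longleftrightarrow>
     (\<forall>\<eta>\<in>Omega N. 0 \<le> \<nu> \<eta>) \<and> (\<Sum>\<eta>\<in>Omega N. \<nu> \<eta>) = 1 \<and>
     (\<forall>\<xi>\<in>Omega N. (\<Sum>\<eta>\<in>Omega N. \<nu> \<eta> * Qmat N \<alpha> \<beta> \<eta> \<xi>) = 0)"

definition tv_dist :: "nat \<Rightarrow> real \<Rightarrow> real \<Rightarrow> (nat set \<Rightarrow> real) \<Rightarrow> real \<Rightarrow> nat set \<Rightarrow> real" where
  "tv_dist N \<alpha> \<beta> \<nu> t \<eta> = 1/2 * (\<Sum>\<xi>\<in>Omega N. \<bar>Pt N \<alpha> \<beta> t \<eta> \<xi> - \<nu> \<xi>\<bar>)"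

definition Tmix :: "nat \<Rightarrow> real \<Rightarrow> real \<Rightarrow> (nat set \<Rightarrow> real) \<Rightarrow> real" where
  "Tmix N \<alpha> \<beta> \<nu> = Inf {t. t > 0 \<and> (\<forall>\<eta>\<in>Omega N. tv_dist N \<alpha> \<beta> \<nu> t \<eta> \<le> 1/4)}"

end

theory Submission imports Defs begin

lemma binom_f:
  fixes x y :: real and f :: "nat \<Rightarrow> real"
  shows "x * (\<Sum>i\<le>k. of_nat (k choose i) * x^i * y^(k-i) * f (Suc i)) + y * (\<Sum>i\<le>k. of_nat (k choose i) * x^i * y^(k-i) * f i)
   = (\<Sum>i\<le>Suc k. of_nat (Suc k choose i) * x^i * y^(Suc k - i) * f i)"
proof -
  have B: "y * (\<Sum>i\<le>k. of_nat (k choose i) * x^i * y^(k-i) * f i)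
      = y^(Suc k) * f 0 + (\<Sum>i\<le>k. of_nat (k choose Suc i) * x^(Suc i) * y^(k-i) * f (Suc i))"
  proof -
    have "y * (\<Sum>i\<le>k. of_nat (k choose i) * x^i * y^(k-i) * f i)
       = (\<Sum>i\<le>k. of_nat (k choose i) * x^i * y^(Suc k-i) * f i)"
      unfolding sum_distrib_left by (intro sum.cong refl) (simp add: Suc_diff_le)
    also have "\<dots> = (\<Sum>i\<le>Suc k. of_nat (k choose i) * x^i * y^(Suc k-i) * f i)"
      by simp
    also have "\<dots> = y^(Suc k) * f 0 + (\<Sum>i\<le>k. of_nat (k choose Suc i) * x^(Suc i) * y^(k-i) * f (Suc i))"
      by (subst sum.atMost_Suc_shift) simp
    finally show ?thesis .
  qed
  have "(\<Sum>i\<le>Suc k. of_nat (Suc k choose i) * x^i * y^(Suc k - i) * f i)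
     = y^(Suc k) * f 0 + (\<Sum>i\<le>k. of_nat (Suc k choose Suc i) * x^(Suc i) * y^(k - i) * f (Suc i))"
    by (subst sum.atMost_Suc_shift) simp
  also have "\<dots> = y^(Suc k) * f 0 + (\<Sum>i\<le>k. of_nat (k choose Suc i) * x^(Suc i) * y^(k-i) * f (Suc i))
      + (\<Sum>i\<le>k. of_nat (k choose i) * x^(Suc i) * y^(k-i) * f (Suc i))"
    by (simp add: sum.distrib[symmetric] algebra_simps)
  also have "(\<Sum>i\<le>k. of_nat (k choose i) * x^(Suc i) * y^(k-i) * f (Suc i))
      = x * (\<Sum>i\<le>k. of_nat (k choose i) * x^i * y^(k-i) * f (Suc i))"
    by (simp add: sum_distrib_left algebra_simps)
  finally show ?thesis using B by simp
qed

locale bd = fixes N :: nat and a b :: real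
  assumes N2: "2 \<le> N" and a0: "0 \<le> a" and a1: "a \<le> 1" and b0: "0 \<le> b" and b1: "b \<le> 1"
begin

definition mv :: "nat \<Rightarrow> nat set \<Rightarrow> nat set" where
 "mv m \<eta> = (if m < N-2 then swap (Suc m) \<eta> else if m = N-2 then insert 1 \<eta>
     else if m = N-1 then \<eta> - {1} else if m = N then insert (N-1) \<eta> else \<eta> - {N-1})"

definition wt :: "nat \<Rightarrow> real" where
 "wt m = (if m < N-2 then 1 else if m = N-2 then a else if m = N-1 then 1-a
     else if m = N then b else 1-b) / N"

definition Ph :: "(nat set \<Rightarrow> real) \<Rightarrow> nat set \<Rightarrow> real" where
 "Ph g \<eta> = (\<Sum>m<N+2. wt m * g (mv m \<eta>))"

definition Ph2 :: "(nat set \<times> nat set \<Rightarrow> real) \<Rightarrow> nat set \<times> nat set \<Rightarrow> real" where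
 "Ph2 G p = (\<Sum>m<N+2. wt m * G (mv m (fst p), mv m (snd p)))"

lemma wt_nonneg: "0 \<le> wt m"
  using a0 a1 b0 b1 by (simp add: wt_def)

lemma sum_split: "(\<Sum>m<N+2. f m) = (\<Sum>m<N-2. f m) + f (N-2) + f (N-1) + f N + f (N+1)"
proof -
  obtain n where e: "N = n + 2" using N2 by (metis add.commute le_Suc_ex)
  show ?thesis unfolding e by (simp add: numeral_2_eq_2)
qed

lemma wt_sum: "(\<Sum>m<N+2. wt m) = 1"
proof -
  have "(\<Sum>m<N-2. wt m) = (N-2) / N" by (simp add: wt_def)
  moreover have "wt (N-2) = a/N" "wt (N-1) = (1-a)/N" "wt N = b / N" "wt (N+1) = (1-b)/N"
    using N2 by (auto simp: wt_def)
  ultimately show ?thesis using N2 unfolding sum_split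
    by (simp only:) (simp add: field_simps)
qed

lemma mv_Omega: assumes "\<eta> \<in> Omega N" shows "mv m \<eta> \<in> Omega N"
  using assms N2 unfolding mv_def Omega_def swap_def by (auto split: if_splits)

lemma mv_mono: assumes "\<eta> \<subseteq> \<zeta>" shows "mv m \<eta> \<subseteq> mv m \<zeta>"
  using assms unfolding mv_def swap_def by (auto split: if_splits)

lemma Ph2_Suc: "(Ph2 ^^ Suc k) G p = (\<Sum>m<N+2. wt m * (Ph2^^k) G (mv m (fst p), mv m (snd p)))"
  by (simp only: funpow.simps o_apply) (rule Ph2_def)

lemma Ph_Suc: "(Ph ^^ Suc k) g \<eta> = (\<Sum>m<N+2. wt m * (Ph^^k) g (mv m \<eta>))"
  by (simp only: funpow.simps o_apply) (rule Ph_def)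

lemma Ph_cong: assumes "\<eta> \<in> Omega N" "\<And>\<theta>. \<theta> \<in> Omega N \<Longrightarrow> g \<theta> = g' \<theta>"
  shows "Ph g \<eta> = Ph g' \<eta>"
  unfolding Ph_def by (rule sum.cong[OF refl]) (simp add: assms(2) mv_Omega[OF assms(1)])

lemma Phk_cong: assumes "\<eta> \<in> Omega N" "\<And>\<theta>. \<theta> \<in> Omega N \<Longrightarrow> g \<theta> = g' \<theta>"
  shows "(Ph ^^ k) g \<eta> = (Ph ^^ k) g' \<eta>"
  using assms(1)
proof (induction k arbitrary: \<eta>)
  case 0 then show ?case using assms(2) by simp
next
  case (Suc k) show ?case unfolding funpow.simps o_apply
    by (rule Ph_cong[OF Suc.prems]) (rule Suc.IH)
qed

lemma Ph_sum: "Ph (\<lambda>\<theta>. \<Sum>i\<in>I. f i \<theta>) \<eta> = (\<Sum>i\<in>I. Ph (f i) \<eta>)"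
  unfolding Ph_def by (simp add: sum_distrib_left sum.swap[of _ I])

lemma Phk_sum: "(Ph ^^ k) (\<lambda>\<theta>. \<Sum>i\<in>I. f i \<theta>) \<eta> = (\<Sum>i\<in>I. (Ph ^^ k) (f i) \<eta>)"
proof (induction k arbitrary: \<eta>)
  case 0 then show ?case by simp
next
  case (Suc k)
  have eq: "(Ph ^^ k) (\<lambda>\<theta>. \<Sum>i\<in>I. f i \<theta>) = (\<lambda>\<theta>. \<Sum>i\<in>I. (Ph ^^ k) (f i) \<theta>)"
    by (intro ext) (rule Suc.IH)
  have "(Ph ^^ Suc k) (\<lambda>\<theta>. \<Sum>i\<in>I. f i \<theta>) \<eta> = Ph (\<lambda>\<theta>. \<Sum>i\<in>I. (Ph ^^ k) (f i) \<theta>) \<eta>"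
    by (simp only: funpow.simps o_apply eq)
  also have "\<dots> = (\<Sum>i\<in>I. (Ph ^^ Suc k) (f i) \<eta>)" by (simp add: Ph_sum)
  finally show ?case .
qed

lemma Ph_lin: "Ph (\<lambda>\<theta>. c * g \<theta> + d * g' \<theta> + e) \<eta> = c * Ph g \<eta> + d * Ph g' \<eta> + e"
proof -
  have "Ph (\<lambda>\<theta>. c * g \<theta> + d * g' \<theta> + e) \<eta> = c * Ph g \<eta> + d * Ph g' \<eta> + e * (\<Sum>m<N+2. wt m)"
    unfolding Ph_def by (simp add: sum.distrib sum_distrib_left sum_distrib_right algebra_simps)
  then show ?thesis unfolding wt_sum by simp
qed

lemma Phk_lin: "(Ph ^^ k) (\<lambda>\<theta>. c * g \<theta> + d * g' \<theta> + e) \<eta> = c * (Ph ^^ k) g \<eta> + d * (Ph ^^ k) g' \<eta> + e"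
proof (induction k arbitrary: \<eta>)
  case 0 then show ?case by simp
next
  case (Suc k)
  have eq: "(Ph ^^ k) (\<lambda>\<theta>. c * g \<theta> + d * g' \<theta> + e) = (\<lambda>\<theta>. c * (Ph ^^ k) g \<theta> + d * (Ph ^^ k) g' \<theta> + e)"
    by (intro ext) (rule Suc.IH)
  have "(Ph ^^ Suc k) (\<lambda>\<theta>. c * g \<theta> + d * g' \<theta> + e) \<eta>
     = Ph (\<lambda>\<theta>. c * (Ph ^^ k) g \<theta> + d * (Ph ^^ k) g' \<theta> + e) \<eta>"
    by (simp only: funpow.simps o_apply eq)
  also have "\<dots> = c * (Ph ^^ Suc k) g \<eta> + d * (Ph ^^ Suc k) g' \<eta> + e" by (simp add: Ph_lin)
  finally show ?case .
qed

lemma Phk_const: "(Ph ^^ k) (\<lambda>\<theta>. e) \<eta> = e"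
  using Phk_lin[of k 0 "\<lambda>_. 0" 0 "\<lambda>_. 0" e] by simp

lemma Ph_mono: assumes "\<eta> \<in> Omega N" "\<And>\<theta>. \<theta> \<in> Omega N \<Longrightarrow> g \<theta> \<le> g' \<theta>"
  shows "Ph g \<eta> \<le> Ph g' \<eta>"
  unfolding Ph_def using assms mv_Omega wt_nonneg by (intro sum_mono mult_left_mono) auto

lemma Phk_mono: assumes "\<eta> \<in> Omega N" "\<And>\<theta>. \<theta> \<in> Omega N \<Longrightarrow> g \<theta> \<le> g' \<theta>"
  shows "(Ph ^^ k) g \<eta> \<le> (Ph ^^ k) g' \<eta>"
  using assms(1)
proof (induction k arbitrary: \<eta>)
  case 0 then show ?case using assms(2) by simp
next
  case (Suc k) show ?case unfolding funpow.simps o_apply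
    by (rule Ph_mono[OF Suc.prems]) (rule Suc.IH)
qed

lemma Ph2k_marg1: "(Ph2 ^^ k) (\<lambda>q. g (fst q)) p = (Ph ^^ k) g (fst p)"
proof (induction k arbitrary: p)
  case 0 then show ?case by simp
next
  case (Suc k) then show ?case by (simp only: Ph2_Suc Ph_Suc fst_conv snd_conv)
qed

lemma Ph2k_marg2: "(Ph2 ^^ k) (\<lambda>q. g (snd q)) p = (Ph ^^ k) g (snd p)"
proof (induction k arbitrary: p)
  case 0 then show ?case by simp
next
  case (Suc k) then show ?case by (simp only: Ph2_Suc Ph_Suc fst_conv snd_conv)
qed

lemma Ph2k_diff: "(Ph2 ^^ k) (\<lambda>q. G q - G' q) p = (Ph2 ^^ k) G p - (Ph2 ^^ k) G' p"
proof (induction k arbitrary: p)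
  case 0 then show ?case by simp
next
  case (Suc k) then show ?case by (simp only: Ph2_Suc sum_subtractf right_diff_distrib)
qed

lemma Ph2k_sum: "(Ph2 ^^ k) (\<lambda>q. \<Sum>i\<in>I. F i q) p = (\<Sum>i\<in>I. (Ph2 ^^ k) (F i) p)"
proof (induction k arbitrary: p)
  case 0 then show ?case by simp
next
  case (Suc k) then show ?case by (simp only: Ph2_Suc sum_distrib_left) (rule sum.swap)
qed

lemma Ph2k_cmult: "(Ph2 ^^ k) (\<lambda>q. c * G q) p = c * (Ph2 ^^ k) G p"
proof (induction k arbitrary: p)
  case 0 then show ?case by simp
next
  case (Suc k) then show ?case by (simp only: Ph2_Suc sum_distrib_left mult.left_commute)
qed

lemma Ph2k_mono: assumes inv: "\<And>q m. q \<in> S \<Longrightarrow> (mv m (fst q), mv m (snd q)) \<in> S"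
  and le: "\<And>q. q \<in> S \<Longrightarrow> G q \<le> G' q" and p: "p \<in> S"
  shows "(Ph2 ^^ k) G p \<le> (Ph2 ^^ k) G' p"
  using p
proof (induction k arbitrary: p)
  case 0 then show ?case using le by simp
next
  case (Suc k) then show ?case unfolding Ph2_Suc
    using inv wt_nonneg by (intro sum_mono mult_left_mono) auto
qed

lemma Ph2k_abs: "\<bar>(Ph2 ^^ k) G p\<bar> \<le> (Ph2 ^^ k) (\<lambda>q. \<bar>G q\<bar>) p"
proof (induction k arbitrary: p)
  case 0 then show ?case by simp
next
  case (Suc k)
  have "\<bar>(Ph2 ^^ Suc k) G p\<bar> \<le> (\<Sum>m<N+2. \<bar>wt m * (Ph2 ^^ k) G (mv m (fst p), mv m (snd p))\<bar>)"
    unfolding Ph2_Suc by (rule sum_abs)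
  also have "\<dots> \<le> (\<Sum>m<N+2. wt m * (Ph2 ^^ k) (\<lambda>q. \<bar>G q\<bar>) (mv m (fst p), mv m (snd p)))"
    using Suc wt_nonneg by (intro sum_mono) (simp add: abs_mult mult_left_mono)
  finally show ?case by (simp only: Ph2_Suc)
qed

lemma gen_Ph: "gen N a b g \<eta> = N/2 * (Ph g \<eta> - g \<eta>)"
proof -
  have s1: "(\<Sum>m<N-2. wt m * g (mv m \<eta>)) = (1/N) * (\<Sum>x\<in>{1..N-2}. g (swap x \<eta>))"
    by (simp add: wt_def mv_def sum.atLeast1_atMost_eq sum_distrib_left)
  have s2: "(\<Sum>x\<in>{1..N-2}. g (swap x \<eta>) - g \<eta>) = (\<Sum>x\<in>{1..N-2}. g (swap x \<eta>)) - (N-2) * g \<eta>"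
    using N2 by (simp add: sum_subtractf of_nat_diff)
  have w: "wt (N-2) = a/N" "wt (N-1) = (1-a)/N" "wt N = b / N" "wt (N+1) = (1-b)/N"
    using N2 by (auto simp: wt_def)
  have m: "mv (N-2) \<eta> = insert 1 \<eta>" "mv (N-1) \<eta> = \<eta> - {1}" "mv N \<eta> = insert (N-1) \<eta>" "mv (N+1) \<eta> = \<eta> - {N-1}"
    using N2 by (auto simp: mv_def)
  have Ph: "Ph g \<eta> = (1/N) * (\<Sum>x\<in>{1..N-2}. g (swap x \<eta>)) + a/N * g (insert 1 \<eta>) + (1-a)/N * g (\<eta> - {1})
      + b/N * g (insert (N-1) \<eta>) + (1-b)/N * g (\<eta> - {N-1})"
    unfolding Ph_def sum_split s1 w m by simp
  have c1: "1/2 * (a * (1 - occ \<eta> 1) + (1 - a) * occ \<eta> 1) * (g (flip 1 \<eta>) - g \<eta>) = 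
     1/2 * (a * g (insert 1 \<eta>) + (1-a) * g (\<eta> - {1}) - g \<eta>)" 
    by (cases "1 \<in> \<eta>") (auto simp: occ_def flip_def insert_absorb field_simps)
  have c2: "1/2 * (b * (1 - occ \<eta> (N-1)) + (1 - b) * occ \<eta> (N-1)) * (g (flip (N-1) \<eta>) - g \<eta>) = 
     1/2 * (b * g (insert (N-1) \<eta>) + (1-b) * g (\<eta> - {N-1}) - g \<eta>)" 
    by (cases "N-1 \<in> \<eta>") (auto simp: occ_def flip_def insert_absorb field_simps)
  show ?thesis unfolding gen_def s2 Ph c1 c2 using N2
    by (simp add: field_simps)
qed

lemma finite_Omega: "finite (Omega N)" by (simp add: Omega_def)

definition K :: "nat \<Rightarrow> nat set \<Rightarrow> nat set \<Rightarrow> real" where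
  "K i \<eta> \<xi> = (Ph ^^ i) (\<lambda>\<zeta>. if \<zeta> = \<xi> then 1 else 0) \<eta>"

lemma Ph_cmult: "Ph (\<lambda>\<theta>. c * g \<theta>) \<eta> = c * Ph g \<eta>"
  using Ph_lin[of c g 0 g 0] by simp

lemma Q_sum: assumes "\<eta> \<in> Omega N"
  shows "(\<Sum>\<zeta>\<in>Omega N. Qmat N a b \<eta> \<zeta> * F \<zeta>) = N/2 * (Ph F \<eta> - F \<eta>)"
proof -
  have "(\<Sum>\<zeta>\<in>Omega N. Qmat N a b \<eta> \<zeta> * F \<zeta>)
     = N/2 * ((\<Sum>\<zeta>\<in>Omega N. Ph (\<lambda>\<theta>. if \<theta> = \<zeta> then 1 else 0) \<eta> * F \<zeta>)
         - (\<Sum>\<zeta>\<in>Omega N. (if \<eta> = \<zeta> then 1 else 0) * F \<zeta>))"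
    by (simp add: Qmat_def gen_Ph sum_distrib_left sum_subtractf algebra_simps)
  also have "(\<Sum>\<zeta>\<in>Omega N. (if \<eta> = \<zeta> then 1 else 0) * F \<zeta>) = F \<eta>"
    using assms finite_Omega
    by (subst sum.cong[OF refl, where h="\<lambda>\<zeta>. if \<eta> = \<zeta> then F \<zeta> else 0"]) auto
  also have "(\<Sum>\<zeta>\<in>Omega N. Ph (\<lambda>\<theta>. if \<theta> = \<zeta> then 1 else 0) \<eta> * F \<zeta>)
      = Ph (\<lambda>\<theta>. \<Sum>\<zeta>\<in>Omega N. F \<zeta> * (if \<theta> = \<zeta> then 1 else 0)) \<eta>"
    by (simp add: Ph_sum Ph_cmult mult.commute)
  also have "\<dots> = Ph F \<eta>"
    using assms finite_Omega by (intro Ph_cong) (simp_all add: if_distrib cong: if_cong)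
  finally show ?thesis .
qed

lemma Qpow_step: assumes "\<eta> \<in> Omega N"
  shows "Qpow N a b (Suc k) \<eta> \<xi> = N/2 * (Ph (\<lambda>\<zeta>. Qpow N a b k \<zeta> \<xi>) \<eta> - Qpow N a b k \<eta> \<xi>)"
  using Q_sum[OF assms] by simp

lemma Qpow_binom: assumes "\<eta> \<in> Omega N"
  shows "Qpow N a b k \<eta> \<xi> = (\<Sum>i\<le>k. of_nat (k choose i) * (N/2)^i * (-(N/2))^(k-i) * K i \<eta> \<xi>)"
  using assms
proof (induction k arbitrary: \<eta>)
  case 0 then show ?case by (simp add: K_def)
next
  case (Suc k)
  have "Ph (\<lambda>\<zeta>. Qpow N a b k \<zeta> \<xi>) \<eta>
      = Ph (\<lambda>\<zeta>. \<Sum>i\<le>k. of_nat (k choose i) * (N/2)^i * (-(N/2))^(k-i) * K i \<zeta> \<xi>) \<eta>"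
    using Suc by (intro Ph_cong) auto
  also have "\<dots> = (\<Sum>i\<le>k. of_nat (k choose i) * (N/2)^i * (-(N/2))^(k-i) * K (Suc i) \<eta> \<xi>)"
    by (simp add: Ph_sum Ph_cmult K_def)
  finally have e: "Ph (\<lambda>\<zeta>. Qpow N a b k \<zeta> \<xi>) \<eta> = \<dots>" .
  show ?case unfolding Qpow_step[OF Suc.prems] e Suc.IH[OF Suc.prems]
    using binom_f[of "N/2" k "-(N/2)" "\<lambda>i. K i \<eta> \<xi>"] by (simp add: algebra_simps)
qed

lemma K_bounds: assumes "\<eta> \<in> Omega N" shows "0 \<le> K i \<eta> \<xi>" "K i \<eta> \<xi> \<le> 1"
proof -
  have "(Ph ^^ i) (\<lambda>_. 0) \<eta> \<le> K i \<eta> \<xi>" unfolding K_def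
    using assms by (intro Phk_mono) auto
  then show "0 \<le> K i \<eta> \<xi>" by (simp add: Phk_const)
  have "K i \<eta> \<xi> \<le> (Ph ^^ i) (\<lambda>_. 1) \<eta>" unfolding K_def
    using assms by (intro Phk_mono) auto
  then show "K i \<eta> \<xi> \<le> 1" by (simp add: Phk_const)
qed

lemma term_eq:
  assumes "i \<le> k"
  shows "t^k / fact k * (of_nat (k choose i) * (N/2)^i * (-(N/2))^(k-i) * K i \<eta> \<xi>)
    = ((N/2*t)^i / fact i * K i \<eta> \<xi>) * ((-(N/2*t))^(k-i) / fact (k-i))"
proof -
  have tk: "t^k = t^i * t^(k-i)" using assms by (simp add: power_add[symmetric])
  have c: "(of_nat (k choose i) :: real) / fact k = 1 / (fact i * fact (k-i))"
    using assms by (simp add: binomial_fact)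
  have m: "(-(N/2*t))^(k-i) = (-(N/2))^(k-i) * t^(k-i)"
    by (metis minus_mult_left power_mult_distrib)
  have "t^k / fact k * (of_nat (k choose i) * (N/2)^i * (-(N/2))^(k-i) * K i \<eta> \<xi>)
     = (of_nat (k choose i) / fact k) * (t^i * t^(k-i)) * (N/2)^i * (-(N/2))^(k-i) * K i \<eta> \<xi>"
    unfolding tk by simp
  also have "\<dots> = ((N/2*t)^i / fact i * K i \<eta> \<xi>) * ((-(N/2*t))^(k-i) / fact (k-i))"
    unfolding c m by (simp add: power_mult_distrib field_simps)
  finally show ?thesis .
qed

lemma Pt_sums: assumes "\<eta> \<in> Omega N"
  shows "(\<lambda>k. t^k / fact k * Qpow N a b k \<eta> \<xi>) sums
     ((\<Sum>i. (N/2*t)^i / fact i * K i \<eta> \<xi>) * exp (-(N/2*t)))"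
proof -
  obtain x where x: "x = N/2*t" by blast
  define A where "A i = x^i / fact i * K i \<eta> \<xi>" for i
  define B where "B j = (-x)^j / fact j" for j
  have e1: "summable (\<lambda>j. norm (x^j / fact j))"
    using summable_norm_exp[of x] by (simp add: divide_inverse_commute)
  have nA: "summable (\<lambda>i. norm (A i))"
  proof (rule summable_comparison_test'[OF e1])
    fix n :: nat assume "n \<ge> 0"
    have "norm (norm (A n)) = norm (x^n / fact n) * \<bar>K n \<eta> \<xi>\<bar>"
      unfolding A_def by (simp only: norm_mult real_norm_def abs_abs abs_mult)
    also have "\<dots> \<le> norm (x^n / fact n) * 1"
      using K_bounds[OF assms, of n \<xi>] by (intro mult_left_mono) auto
    finally show "norm (norm (A n)) \<le> norm (x^n / fact n)" by simp
  qed
  have nB: "summable (\<lambda>j. norm (B j))"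
    using summable_norm_exp[of "-x"] unfolding B_def by (simp add: divide_inverse_commute)
  have sB: "(\<Sum>j. B j) = exp (-x)"
  proof -
    have "B sums exp (-x)"
      using exp_converges[of "-x"] unfolding B_def by (simp add: divide_inverse_commute)
    then show ?thesis by (simp add: sums_iff)
  qed
  have S: "(\<lambda>k. \<Sum>i\<le>k. A i * B (k - i)) sums ((\<Sum>k. A k) * (\<Sum>k. B k))"
    by (rule Cauchy_product_sums[OF nA nB])
  have "(\<Sum>i\<le>k. A i * B (k - i)) = t^k / fact k * Qpow N a b k \<eta> \<xi>" for k
    unfolding Qpow_binom[OF assms] sum_distrib_left A_def B_def x
    by (rule sum.cong[OF refl], rule term_eq[symmetric]) simp
  then have "(\<lambda>k. \<Sum>i\<le>k. A i * B (k - i)) = (\<lambda>k. t^k / fact k * Qpow N a b k \<eta> \<xi>)"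
    by (rule ext)
  with S show ?thesis unfolding sB A_def x by simp
qed

lemma Ph_explicit: "Ph g \<eta> = (1/N) * (\<Sum>x\<in>{1..N-2}. g (swap x \<eta>)) + a/N * g (insert 1 \<eta>) + (1-a)/N * g (\<eta> - {1})
      + b/N * g (insert (N-1) \<eta>) + (1-b)/N * g (\<eta> - {N-1})"
proof -
  have s1: "(\<Sum>m<N-2. wt m * g (mv m \<eta>)) = (1/N) * (\<Sum>x\<in>{1..N-2}. g (swap x \<eta>))"
    by (simp add: wt_def mv_def sum.atLeast1_atMost_eq sum_distrib_left)
  have w: "wt (N-2) = a/N" "wt (N-1) = (1-a)/N" "wt N = b / N" "wt (N+1) = (1-b)/N"
    using N2 by (auto simp: wt_def)
  have m: "mv (N-2) \<eta> = insert 1 \<eta>" "mv (N-1) \<eta> = \<eta> - {1}" "mv N \<eta> = insert (N-1) \<eta>" "mv (N+1) \<eta> = \<eta> - {N-1}"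
    using N2 by (auto simp: mv_def)
  show ?thesis unfolding Ph_def sum_split s1 w m by simp
qed

lemma occ_Omega0: "\<eta> \<in> Omega N \<Longrightarrow> occ \<eta> 0 = 0"
  by (auto simp: occ_def Omega_def)
lemma occ_OmegaN: "\<eta> \<in> Omega N \<Longrightarrow> occ \<eta> N = 0"
  using N2 by (auto simp: occ_def Omega_def)

lemma swap_sum_occ: assumes "1 \<le> x"
  shows "(\<Sum>y\<in>{1..N-2}. occ (swap y \<eta>) x) = (N-2) * occ \<eta> x
     + (if x \<le> N-2 then occ \<eta> (x+1) - occ \<eta> x else 0)
     + (if 2 \<le> x \<and> x - 1 \<le> N-2 then occ \<eta> (x-1) - occ \<eta> x else 0)"
proof -
  have "occ (swap y \<eta>) x = occ \<eta> x + (if y = x then occ \<eta> (x+1) - occ \<eta> x else 0)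
      + (if y = x - 1 then occ \<eta> (x-1) - occ \<eta> x else 0)" for y
    using assms by (auto simp: occ_def swap_def)
  then have "(\<Sum>y\<in>{1..N-2}. occ (swap y \<eta>) x) = (\<Sum>y\<in>{1..N-2}. occ \<eta> x)
      + (\<Sum>y\<in>{1..N-2}. (if y = x then occ \<eta> (x+1) - occ \<eta> x else 0))
      + (\<Sum>y\<in>{1..N-2}. (if y = x - 1 then occ \<eta> (x-1) - occ \<eta> x else 0))"
    by (simp add: sum.distrib)
  also have "\<dots> = (N-2) * occ \<eta> x
     + (if x \<le> N-2 then occ \<eta> (x+1) - occ \<eta> x else 0)
     + (if 2 \<le> x \<and> x - 1 \<le> N-2 then occ \<eta> (x-1) - occ \<eta> x else 0)"
  proof -
    have c1: "(\<Sum>y\<in>{1..N-2}. occ \<eta> x) = (N-2) * occ \<eta> x" by simp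
    have c2: "(\<Sum>y\<in>{1..N-2}. (if y = x then occ \<eta> (x+1) - occ \<eta> x else 0))
       = (if x \<le> N-2 then occ \<eta> (x+1) - occ \<eta> x else 0)"
      using assms by (subst sum.delta) simp_all
    have c3: "(\<Sum>y\<in>{1..N-2}. (if y = x - 1 then occ \<eta> (x-1) - occ \<eta> x else 0))
       = (if 2 \<le> x \<and> x - 1 \<le> N-2 then occ \<eta> (x-1) - occ \<eta> x else 0)"
    proof (subst sum.delta)
      show "finite {1..N-2}" by simp
      have "(x - 1 \<in> {1..N-2}) = (2 \<le> x \<and> x - 1 \<le> N-2)" using assms by auto
      then show "(if x - 1 \<in> {1..N - 2} then occ \<eta> (x - 1) - occ \<eta> x else 0) =
          (if 2 \<le> x \<and> x - 1 \<le> N - 2 then occ \<eta> (x - 1) - occ \<eta> x else 0)" by simp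
    qed
    show ?thesis unfolding c1 c2 c3 ..
  qed
  finally show ?thesis .
qed

lemma Ph_occ: assumes "\<eta> \<in> Omega N" "1 \<le> x" "x \<le> N-1"
  shows "Ph (\<lambda>\<theta>. occ \<theta> x) \<eta> = ((N-2) * occ \<eta> x + occ \<eta> (x+1) + occ \<eta> (x-1)
      + (if x = 1 then a else 0) + (if x = N-1 then b else 0)) / N"
proof -
  have i1: "occ (insert 1 \<eta>) x = (if x = 1 then 1 else occ \<eta> x)" "occ (\<eta> - {1}) x = (if x = 1 then 0 else occ \<eta> x)"
    "occ (insert (N-1) \<eta>) x = (if x = N-1 then 1 else occ \<eta> x)" "occ (\<eta> - {N-1}) x = (if x = N-1 then 0 else occ \<eta> x)"
    by (auto simp: occ_def)
  have z: "x = N-1 \<Longrightarrow> occ \<eta> (x+1) = 0" "x = 1 \<Longrightarrow> occ \<eta> (x-1) = 0"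
    using assms occ_Omega0 occ_OmegaN N2 by auto
  have alg: "1/N * S + a/N * I1 + (1-a)/N * J1 + b/N * I2 + (1-b)/N * J2
     = (S + (a*I1 + (1-a)*J1) + (b*I2 + (1-b)*J2)) / N" for S I1 J1 I2 J2 :: real
    by (simp add: add_divide_distrib)
  have r1: "a * occ (insert 1 \<eta>) x + (1-a) * occ (\<eta> - {1}) x = (if x = 1 then a else occ \<eta> x)"
    unfolding i1 by (simp add: algebra_simps)
  have r2: "b * occ (insert (N-1) \<eta>) x + (1-b) * occ (\<eta> - {N-1}) x = (if x = N-1 then b else occ \<eta> x)"
    unfolding i1 by (simp add: algebra_simps)
  have num: "(N-2) * occ \<eta> x
     + (if x \<le> N-2 then occ \<eta> (x+1) - occ \<eta> x else 0)
     + (if 2 \<le> x \<and> x - 1 \<le> N-2 then occ \<eta> (x-1) - occ \<eta> x else 0)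
     + (if x = 1 then a else occ \<eta> x) + (if x = N-1 then b else occ \<eta> x)
     = (N-2) * occ \<eta> x + occ \<eta> (x+1) + occ \<eta> (x-1)
      + (if x = 1 then a else 0) + (if x = N-1 then b else 0)"
  proof (cases "x = 1")
    case True
    then show ?thesis using z assms(3) by (cases "x = N-1") auto
  next
    case False
    then show ?thesis using z assms(2,3) by (cases "x = N-1") auto
  qed
  show ?thesis unfolding Ph_explicit swap_sum_occ[OF assms(2)] alg r1 r2 num[symmetric]
    by (simp add: add.assoc)
qed

lemma Phk_occ_step: assumes "\<theta> \<in> Omega N" "1 \<le> x" "x \<le> N-1"
  shows "(Ph^^Suc k) (\<lambda>\<theta>. occ \<theta> x) \<theta> = ((N-2) * (Ph^^k) (\<lambda>\<theta>. occ \<theta> x) \<theta>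
     + ((Ph^^k) (\<lambda>\<theta>. occ \<theta> (x+1)) \<theta> + (Ph^^k) (\<lambda>\<theta>. occ \<theta> (x-1)) \<theta>)
     + ((if x = 1 then a else 0) + (if x = N-1 then b else 0))) / N"
proof -
  define c where "c = (if x = 1 then a else 0) + (if x = N-1 then b else 0)"
  have "(Ph^^Suc k) (\<lambda>\<theta>. occ \<theta> x) \<theta> = (Ph^^k) (Ph (\<lambda>\<theta>. occ \<theta> x)) \<theta>"
    by (simp only: funpow_Suc_right o_apply)
  also have "\<dots> = (Ph^^k) (\<lambda>\<zeta>. (N-2)/N * occ \<zeta> x + 1/N * (1 * occ \<zeta> (x+1) + 1 * occ \<zeta> (x-1) + 0) + c/N) \<theta>"
    using assms by (intro Phk_cong) (simp_all add: Ph_occ c_def add_divide_distrib)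
  also have "\<dots> = (N-2)/N * (Ph^^k) (\<lambda>\<theta>. occ \<theta> x) \<theta> + 1/N *
      (1 * (Ph^^k) (\<lambda>\<theta>. occ \<theta> (x+1)) \<theta> + 1 * (Ph^^k) (\<lambda>\<theta>. occ \<theta> (x-1)) \<theta> + 0) + c/N"
    by (simp only: Phk_lin)
  finally have eq: "(Ph^^Suc k) (\<lambda>\<theta>. occ \<theta> x) \<theta> = (N-2)/N * (Ph^^k) (\<lambda>\<theta>. occ \<theta> x) \<theta> + 1/N *
      (1 * (Ph^^k) (\<lambda>\<theta>. occ \<theta> (x+1)) \<theta> + 1 * (Ph^^k) (\<lambda>\<theta>. occ \<theta> (x-1)) \<theta> + 0) + c/N" .
  show ?thesis unfolding eq c_def[symmetric] by (simp add: add_divide_distrib)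
qed

lemma Phk_occ0: assumes "\<theta> \<in> Omega N" shows "(Ph^^k) (\<lambda>\<theta>. occ \<theta> 0) \<theta> = 0"
proof -
  have "(Ph^^k) (\<lambda>\<theta>. occ \<theta> 0) \<theta> = (Ph^^k) (\<lambda>\<theta>. 0) \<theta>"
    using assms by (intro Phk_cong) (auto simp: occ_Omega0)
  then show ?thesis by (simp add: Phk_const)
qed

lemma Phk_occN: assumes "\<theta> \<in> Omega N" shows "(Ph^^k) (\<lambda>\<theta>. occ \<theta> N) \<theta> = 0"
proof -
  have "(Ph^^k) (\<lambda>\<theta>. occ \<theta> N) \<theta> = (Ph^^k) (\<lambda>\<theta>. 0) \<theta>"
    using assms by (intro Phk_cong) (auto simp: occ_OmegaN)
  then show ?thesis by (simp add: Phk_const)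
qed

lemma top_Omega: "{1..N-1} \<in> Omega N" by (simp add: Omega_def)

lemma para: assumes "x \<le> N" shows "4 * (real x * (real N - real x)) \<le> real N ^ 2"
proof -
  have "0 \<le> (real N - 2 * real x)^2" by simp
  then show ?thesis by (simp add: power2_eq_square algebra_simps)
qed

lemma e_bound: assumes "\<eta> \<in> Omega N" "x \<le> N"
  shows "(Ph^^k) (\<lambda>\<theta>. occ \<theta> x) {1..N-1} - (Ph^^k) (\<lambda>\<theta>. occ \<theta> x) \<eta>
     \<le> (1 - 8 / real N ^ 3)^k * (real x * (real N - real x))"
  using assms(2)
proof (induction k arbitrary: x)
  case 0
  show ?case
  proof (cases "x = 0 \<or> x = N")
    case True then show ?thesis using assms(1) top_Omega by (auto simp: occ_Omega0 occ_OmegaN)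
  next
    case False
    then have "1 \<le> real x" "1 \<le> real N - real x" using 0 by auto
    then have "1 \<le> real x * (real N - real x)" by (metis mult_mono' mult_1 order_trans zero_le_one)
    moreover have "occ {1..N-1} x - occ \<eta> x \<le> 1" by (simp add: occ_def)
    ultimately show ?thesis by simp
  qed
next
  case (Suc k)
  define l where "l = 1 - 8 / real N ^ 3"
  have l0: "0 \<le> l"
  proof -
    have "(8::real) \<le> real N ^ 3"
    proof -
      have "(2::real)^3 \<le> real N ^ 3" using N2 by (intro power_mono) auto
      then show ?thesis by simp
    qed
    then show ?thesis using N2 by (simp add: l_def field_simps)
  qed
  show ?case
  proof (cases "x = 0 \<or> x = N")
    case True then show ?thesis using assms(1) top_Omega
      by (auto simp del: funpow.simps simp: Phk_occ0 Phk_occN)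
  next
    case False
    then have x: "1 \<le> x" "x \<le> N-1" using Suc.prems by auto
    let ?h = "\<lambda>x. real x * (real N - real x)"
    define e where "e x = (Ph^^k) (\<lambda>\<theta>. occ \<theta> x) {1..N-1} - (Ph^^k) (\<lambda>\<theta>. occ \<theta> x) \<eta>" for x
    have rec: "(Ph^^Suc k) (\<lambda>\<theta>. occ \<theta> x) {1..N-1} - (Ph^^Suc k) (\<lambda>\<theta>. occ \<theta> x) \<eta>
       = ((N-2) * e x + e (x+1) + e (x-1)) / N"
      unfolding Phk_occ_step[OF top_Omega x] Phk_occ_step[OF assms(1) x] e_def
      using N2 by (simp add: field_simps)
    have i1: "e x \<le> l^k * ?h x" using Suc.IH[of x] x unfolding e_def l_def by simp
    have i2: "e (x+1) \<le> l^k * ?h (x+1)" using Suc.IH[of "x+1"] x unfolding e_def l_def by simp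
    have i3: "e (x-1) \<le> l^k * ?h (x-1)" using Suc.IH[of "x-1"] x unfolding e_def l_def by simp
    have "(N-2) * e x + e (x+1) + e (x-1) \<le> (N-2) * (l^k * ?h x) + l^k * ?h (x+1) + l^k * ?h (x-1)"
      using i1 i2 i3 N2 by (intro add_mono mult_left_mono) auto
    also have "\<dots> = l^k * (N * ?h x - 2)"
      using x N2 by (simp add: of_nat_diff algebra_simps)
    also have "\<dots> \<le> l^k * (N * (l * ?h x))"
    proof (intro mult_left_mono)
      have "4 * ?h x \<le> real N ^ 2" using para x by auto
      have eqq: "8 / real N ^ 3 * (N * ?h x) = 2 * ((4 * ?h x) / real N ^ 2)"
        using N2 by (simp add: power2_eq_square power3_eq_cube)
      have "(4 * ?h x) / real N ^ 2 \<le> 1" using \<open>4 * ?h x \<le> real N ^ 2\<close> N2 by simp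
      then have "8 / real N ^ 3 * (N * ?h x) \<le> 2" unfolding eqq by simp
      moreover have "N * (l * ?h x) = N * ?h x - 8 / real N ^ 3 * (N * ?h x)"
        unfolding l_def by (simp add: algebra_simps diff_divide_distrib)
      ultimately show "N * ?h x - 2 \<le> N * (l * ?h x)" by linarith
    qed (use l0 in simp)
    finally have "(N-2) * e x + e (x+1) + e (x-1) \<le> N * (l^Suc k * ?h x)" by (simp add: algebra_simps)
    then show ?thesis unfolding rec l_def[symmetric] using N2 by (simp add: field_simps)
  qed
qed

lemma pair_bound: assumes "p \<subseteq> q" "q \<in> Omega N"
  shows "(\<Sum>\<xi>\<in>Omega N. \<bar>(if p = \<xi> then 1 else 0) - (if q = \<xi> then 1 else (0::real))\<bar>)
     \<le> 2 * (\<Sum>x\<in>{1..N-1}. occ q x - occ p x)"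
proof (cases "p = q")
  case True then show ?thesis by simp
next
  case False
  have pO: "p \<in> Omega N" using assms by (auto simp: Omega_def)
  have "(\<Sum>\<xi>\<in>Omega N. \<bar>(if p = \<xi> then 1 else 0) - (if q = \<xi> then 1 else (0::real))\<bar>)
      \<le> (\<Sum>\<xi>\<in>Omega N. (if p = \<xi> then 1 else 0) + (if q = \<xi> then 1 else (0::real)))"
    by (intro sum_mono) auto
  also have "\<dots> = 2" using pO assms(2) finite_Omega by (simp add: sum.distrib)
  finally have l: "(\<Sum>\<xi>\<in>Omega N. \<bar>(if p = \<xi> then 1 else 0) - (if q = \<xi> then 1 else (0::real))\<bar>) \<le> 2" .
  obtain y where y: "y \<in> q" "y \<notin> p" using False assms(1) by blast
  then have y1: "y \<in> {1..N-1}" using assms(2) by (auto simp: Omega_def)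
  have "1 \<le> (\<Sum>x\<in>{1..N-1}. occ q x - occ p x)"
  proof -
    have "occ q y - occ p y \<le> (\<Sum>x\<in>{1..N-1}. occ q x - occ p x)"
      using y1 assms(1) by (intro member_le_sum) (auto simp: occ_def)
    moreover have "occ q y - occ p y = 1" using y by (simp add: occ_def)
    ultimately show ?thesis by simp
  qed
  then show ?thesis using l by linarith
qed

lemma K_diff: "K k \<eta> \<xi> - K k \<zeta> \<xi> = (Ph2^^k) (\<lambda>q. (if fst q = \<xi> then 1 else 0) - (if snd q = \<xi> then 1 else 0)) (\<eta>, \<zeta>)"
  unfolding Ph2k_diff K_def
  by (simp add: Ph2k_marg1[of k "\<lambda>\<zeta>. if \<zeta> = \<xi> then 1 else 0"] Ph2k_marg2[of k "\<lambda>\<zeta>. if \<zeta> = \<xi> then 1 else 0"])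

lemma K_tv_top: assumes "\<eta> \<in> Omega N"
  shows "(\<Sum>\<xi>\<in>Omega N. \<bar>K k \<eta> \<xi> - K k {1..N-1} \<xi>\<bar>)
    \<le> 2 * (\<Sum>x\<in>{1..N-1}. (Ph^^k) (\<lambda>\<theta>. occ \<theta> x) {1..N-1} - (Ph^^k) (\<lambda>\<theta>. occ \<theta> x) \<eta>)"
proof -
  define T where "T = {1..N-1}"
  define S where "S = {q. fst q \<subseteq> snd q \<and> snd q \<in> Omega N}"
  have inv: "(mv m (fst q), mv m (snd q)) \<in> S" if "q \<in> S" for q m
    using that mv_mono mv_Omega unfolding S_def by auto
  have pS: "(\<eta>, T) \<in> S" using assms unfolding S_def T_def by (auto simp: Omega_def)
  have "(\<Sum>\<xi>\<in>Omega N. \<bar>K k \<eta> \<xi> - K k T \<xi>\<bar>)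
      \<le> (\<Sum>\<xi>\<in>Omega N. (Ph2^^k) (\<lambda>q. \<bar>(if fst q = \<xi> then 1 else 0) - (if snd q = \<xi> then 1 else (0::real))\<bar>) (\<eta>, T))"
    unfolding K_diff by (intro sum_mono Ph2k_abs)
  also have "\<dots> = (Ph2^^k) (\<lambda>q. \<Sum>\<xi>\<in>Omega N. \<bar>(if fst q = \<xi> then 1 else 0) - (if snd q = \<xi> then 1 else (0::real))\<bar>) (\<eta>, T)"
    by (rule Ph2k_sum[symmetric])
  also have "\<dots> \<le> (Ph2^^k) (\<lambda>q. 2 * (\<Sum>x\<in>T. occ (snd q) x - occ (fst q) x)) (\<eta>, T)"
  proof (rule Ph2k_mono[OF inv _ pS])
    fix q assume "q \<in> S"
    then show "(\<Sum>\<xi>\<in>Omega N. \<bar>(if fst q = \<xi> then 1 else 0) - (if snd q = \<xi> then 1 else (0::real))\<bar>)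
        \<le> 2 * (\<Sum>x\<in>T. occ (snd q) x - occ (fst q) x)"
      unfolding S_def T_def using pair_bound[of "fst q" "snd q"] by auto
  qed
  also have "\<dots> = 2 * (\<Sum>x\<in>T. (Ph2^^k) (\<lambda>q. occ (snd q) x - occ (fst q) x) (\<eta>, T))"
    by (simp only: Ph2k_cmult Ph2k_sum)
  also have "\<dots> = 2 * (\<Sum>x\<in>T. (Ph^^k) (\<lambda>\<theta>. occ \<theta> x) T - (Ph^^k) (\<lambda>\<theta>. occ \<theta> x) \<eta>)"
  proof -
    have "(Ph2^^k) (\<lambda>q. occ (snd q) x - occ (fst q) x) (\<eta>, T) = (Ph^^k) (\<lambda>\<theta>. occ \<theta> x) T - (Ph^^k) (\<lambda>\<theta>. occ \<theta> x) \<eta>" for x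
      using Ph2k_diff[of k "\<lambda>q. occ (snd q) x" "\<lambda>q. occ (fst q) x"] Ph2k_marg1[of k "\<lambda>\<theta>. occ \<theta> x"]
        Ph2k_marg2[of k "\<lambda>\<theta>. occ \<theta> x"] by simp
    then show ?thesis by simp
  qed
  finally show ?thesis unfolding T_def .
qed

lemma K_tv: assumes "\<eta> \<in> Omega N" "\<eta>' \<in> Omega N"
  shows "(\<Sum>\<xi>\<in>Omega N. \<bar>K k \<eta> \<xi> - K k \<eta>' \<xi>\<bar>) \<le> (1 - 8 / real N ^ 3)^k * real N ^ 3"
proof -
  define l where "l = 1 - 8 / real N ^ 3"
  have l0: "0 \<le> l"
  proof -
    have "(2::real)^3 \<le> real N ^ 3" using N2 by (intro power_mono) auto
    then show ?thesis using N2 by (simp add: l_def field_simps)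
  qed
  have one: "(\<Sum>\<xi>\<in>Omega N. \<bar>K k \<theta> \<xi> - K k {1..N-1} \<xi>\<bar>) \<le> l^k * real N ^ 3 / 2"
    if th: "\<theta> \<in> Omega N" for \<theta>
  proof -
    have "(\<Sum>x\<in>{1..N-1}. (Ph^^k) (\<lambda>\<theta>. occ \<theta> x) {1..N-1} - (Ph^^k) (\<lambda>\<theta>. occ \<theta> x) \<theta>)
        \<le> (\<Sum>x\<in>{1..N-1}. l^k * (real N ^ 2 / 4))"
    proof (intro sum_mono)
      fix x assume x: "x \<in> {1..N-1}"
      then have xN: "x \<le> N" by auto
      have "(Ph^^k) (\<lambda>\<theta>. occ \<theta> x) {1..N-1} - (Ph^^k) (\<lambda>\<theta>. occ \<theta> x) \<theta> \<le> l^k * (real x * (real N - real x))"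
        using e_bound[OF th xN] unfolding l_def .
      also have "\<dots> \<le> l^k * (real N ^ 2 / 4)"
        using para[OF xN] l0 by (intro mult_left_mono) auto
      finally show "(Ph^^k) (\<lambda>\<theta>. occ \<theta> x) {1..N-1} - (Ph^^k) (\<lambda>\<theta>. occ \<theta> x) \<theta> \<le> l^k * (real N ^ 2 / 4)" .
    qed
    also have "\<dots> = (N-1) * (l^k * (real N ^ 2 / 4))" by simp
    also have "\<dots> \<le> N * (l^k * (real N ^ 2 / 4))"
      using l0 by (intro mult_right_mono) auto
    finally have "(\<Sum>x\<in>{1..N-1}. (Ph^^k) (\<lambda>\<theta>. occ \<theta> x) {1..N-1} - (Ph^^k) (\<lambda>\<theta>. occ \<theta> x) \<theta>)
        \<le> l^k * real N ^ 3 / 4" by (simp add: power2_eq_square power3_eq_cube algebra_simps)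
    with K_tv_top[OF th, of k] show ?thesis by simp
  qed
  have "(\<Sum>\<xi>\<in>Omega N. \<bar>K k \<eta> \<xi> - K k \<eta>' \<xi>\<bar>)
     \<le> (\<Sum>\<xi>\<in>Omega N. \<bar>K k \<eta> \<xi> - K k {1..N-1} \<xi>\<bar> + \<bar>K k \<eta>' \<xi> - K k {1..N-1} \<xi>\<bar>)"
    by (intro sum_mono) linarith
  also have "\<dots> \<le> l^k * real N ^ 3"
    using one[OF assms(1)] one[OF assms(2)] by (simp add: sum.distrib)
  finally show ?thesis unfolding l_def .
qed

lemma Pt_eq: assumes "\<eta> \<in> Omega N"
  shows "Pt N a b t \<eta> \<xi> = exp (-(N/2*t)) * (\<Sum>i. (N/2*t)^i / fact i * K i \<eta> \<xi>)"
  unfolding Pt_def using sums_unique[OF Pt_sums[OF assms, of t \<xi>]] by (simp add: mult.commute)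

lemma Pt_tv: assumes "\<eta> \<in> Omega N" "\<eta>' \<in> Omega N" "0 \<le> t"
  shows "(\<Sum>\<xi>\<in>Omega N. \<bar>Pt N a b t \<eta> \<xi> - Pt N a b t \<eta>' \<xi>\<bar>) \<le> real N ^ 3 * exp (-(N/2*t) * (8 / real N ^ 3))"
proof -
  obtain x where x: "x = N/2*t" by blast
  have x0: "0 \<le> x" unfolding x using assms(3) by simp
  define l where "l = 1 - 8 / real N ^ 3"
  define c where "c i = x^i / fact i" for i
  define D where "D \<xi> i = K i \<eta> \<xi> - K i \<eta>' \<xi>" for \<xi> i
  have c0: "0 \<le> c i" for i using x0 by (simp add: c_def)
  have cs: "c sums exp x" using exp_converges[of x] unfolding c_def by (simp add: divide_inverse_commute)
  then have csum: "summable c" by (simp add: sums_iff)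
  have Db: "\<bar>D \<xi> i\<bar> \<le> 1" for \<xi> i
    using K_bounds[OF assms(1), of i \<xi>] K_bounds[OF assms(2), of i \<xi>] unfolding D_def by auto
  have sK: "summable (\<lambda>i. c i * K i \<theta> \<xi>)" if "\<theta> \<in> Omega N" for \<theta> \<xi>
  proof (rule summable_comparison_test'[OF csum])
    fix n :: nat assume "n \<ge> 0"
    show "norm (c n * K n \<theta> \<xi>) \<le> c n"
      using K_bounds[OF that, of n \<xi>] c0[of n] by (simp add: abs_mult mult_left_le)
  qed
  have sabs: "summable (\<lambda>i. c i * \<bar>D \<xi> i\<bar>)" for \<xi>
  proof (rule summable_comparison_test'[OF csum])
    fix n :: nat assume "n \<ge> 0"
    show "norm (c n * \<bar>D \<xi> n\<bar>) \<le> c n"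
      using Db[of \<xi> n] c0[of n] by (simp add: abs_mult mult_left_le)
  qed
  have diff: "Pt N a b t \<eta> \<xi> - Pt N a b t \<eta>' \<xi> = exp (-x) * (\<Sum>i. c i * D \<xi> i)" for \<xi>
  proof -
    have h: "(\<Sum>i. c i * D \<xi> i) = (\<Sum>i. c i * K i \<eta> \<xi>) - (\<Sum>i. c i * K i \<eta>' \<xi>)"
      using suminf_diff[OF sK[OF assms(1), of \<xi>] sK[OF assms(2), of \<xi>]]
      unfolding D_def by (simp add: right_diff_distrib)
    have p: "Pt N a b t \<theta> \<xi> = exp (-x) * (\<Sum>i. c i * K i \<theta> \<xi>)" if "\<theta> \<in> Omega N" for \<theta>
      unfolding Pt_eq[OF that] x[symmetric] c_def by simp
    show ?thesis unfolding p[OF assms(1)] p[OF assms(2)] h by (simp only: right_diff_distrib)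
  qed
  have "(\<Sum>\<xi>\<in>Omega N. \<bar>Pt N a b t \<eta> \<xi> - Pt N a b t \<eta>' \<xi>\<bar>) \<le> (\<Sum>\<xi>\<in>Omega N. exp (-x) * (\<Sum>i. c i * \<bar>D \<xi> i\<bar>))"
  proof (intro sum_mono)
    fix \<xi>
    have "\<bar>\<Sum>i. c i * D \<xi> i\<bar> \<le> (\<Sum>i. \<bar>c i * D \<xi> i\<bar>)"
      by (rule summable_rabs) (use sabs[of \<xi>] c0 in \<open>simp add: abs_mult\<close>)
    also have "\<dots> = (\<Sum>i. c i * \<bar>D \<xi> i\<bar>)" using c0 by (simp add: abs_mult)
    finally show "\<bar>Pt N a b t \<eta> \<xi> - Pt N a b t \<eta>' \<xi>\<bar> \<le> exp (-x) * (\<Sum>i. c i * \<bar>D \<xi> i\<bar>)"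
      unfolding diff by (simp add: abs_mult)
  qed
  also have "\<dots> = exp (-x) * (\<Sum>i. \<Sum>\<xi>\<in>Omega N. c i * \<bar>D \<xi> i\<bar>)"
  proof -
    have "(\<Sum>i. \<Sum>\<xi>\<in>Omega N. c i * \<bar>D \<xi> i\<bar>) = (\<Sum>\<xi>\<in>Omega N. \<Sum>i. c i * \<bar>D \<xi> i\<bar>)"
      by (rule suminf_sum) (rule sabs)
    then show ?thesis by (simp only: sum_distrib_left)
  qed
  also have "\<dots> \<le> exp (-x) * (\<Sum>i. real N ^ 3 * ((x * l)^i / fact i))"
  proof (intro mult_left_mono suminf_le)
    fix i
    have "(\<Sum>\<xi>\<in>Omega N. c i * \<bar>D \<xi> i\<bar>) = c i * (\<Sum>\<xi>\<in>Omega N. \<bar>D \<xi> i\<bar>)" by (simp add: sum_distrib_left)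
    also have "\<dots> \<le> c i * (l^i * real N ^ 3)"
      using K_tv[OF assms(1,2), of i] c0[of i] unfolding D_def l_def by (intro mult_left_mono) auto
    also have "\<dots> = real N ^ 3 * ((x * l)^i / fact i)" by (simp add: c_def power_mult_distrib)
    finally show "(\<Sum>\<xi>\<in>Omega N. c i * \<bar>D \<xi> i\<bar>) \<le> real N ^ 3 * ((x * l)^i / fact i)" .
  next
    show "summable (\<lambda>i. \<Sum>\<xi>\<in>Omega N. c i * \<bar>D \<xi> i\<bar>)" by (intro summable_sum sabs)
  next
    have "(\<lambda>i. (x*l)^i / fact i) sums exp (x*l)" using exp_converges[of "x*l"] by (simp add: divide_inverse_commute)
    then show "summable (\<lambda>i. real N ^ 3 * ((x * l)^i / fact i))" by (intro summable_mult) (simp add: sums_iff)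
  qed simp
  also have "(\<Sum>i. real N ^ 3 * ((x * l)^i / fact i)) = real N ^ 3 * exp (x * l)"
  proof -
    have "(\<lambda>i. (x*l)^i / fact i) sums exp (x*l)" using exp_converges[of "x*l"] by (simp add: divide_inverse_commute)
    then have "(\<lambda>i. real N ^ 3 * ((x*l)^i / fact i)) sums (real N ^ 3 * exp (x*l))" by (rule sums_mult)
    then show ?thesis by (rule sums_unique[symmetric])
  qed
  also have "exp (-x) * (real N ^ 3 * exp (x * l)) = real N ^ 3 * exp (-(N/2*t) * (8 / real N ^ 3))"
    unfolding x[symmetric] l_def by (simp add: exp_add[symmetric] algebra_simps)
  finally show ?thesis .
qed

lemma Qpow_stat: assumes "stationary N a b \<nu>" "\<xi> \<in> Omega N"
  shows "(\<Sum>\<eta>\<in>Omega N. \<nu> \<eta> * Qpow N a b (Suc k) \<eta> \<xi>) = 0"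
proof -
  have "(\<Sum>\<eta>\<in>Omega N. \<nu> \<eta> * Qpow N a b (Suc k) \<eta> \<xi>)
      = (\<Sum>\<zeta>\<in>Omega N. (\<Sum>\<eta>\<in>Omega N. \<nu> \<eta> * Qmat N a b \<eta> \<zeta>) * Qpow N a b k \<zeta> \<xi>)"
    unfolding Qpow.simps sum_distrib_left by (subst sum.swap) (simp add: sum_distrib_right mult.assoc)
  also have "\<dots> = 0" using assms(1) unfolding stationary_def by simp
  finally show ?thesis .
qed

lemma Pt_stat: assumes "stationary N a b \<nu>" "\<xi> \<in> Omega N"
  shows "(\<Sum>\<eta>\<in>Omega N. \<nu> \<eta> * Pt N a b t \<eta> \<xi>) = \<nu> \<xi>"
proof -
  define f where "f \<eta> k = t^k / fact k * Qpow N a b k \<eta> \<xi>" for \<eta> k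
  have sf: "summable (\<lambda>k. \<nu> \<eta> * f \<eta> k)" if "\<eta> \<in> Omega N" for \<eta>
    using Pt_sums[OF that, of t \<xi>] unfolding f_def by (intro summable_mult) (auto simp: sums_iff)
  have "(\<Sum>\<eta>\<in>Omega N. \<nu> \<eta> * Pt N a b t \<eta> \<xi>) = (\<Sum>\<eta>\<in>Omega N. \<Sum>k. \<nu> \<eta> * f \<eta> k)"
  proof (intro sum.cong refl)
    fix \<eta> assume "\<eta> \<in> Omega N"
    then have "summable (f \<eta>)" using Pt_sums[of \<eta> t \<xi>] unfolding f_def by (auto simp: sums_iff)
    then have "(\<Sum>k. \<nu> \<eta> * f \<eta> k) = \<nu> \<eta> * (\<Sum>k. f \<eta> k)" by (rule suminf_mult)
    then show "\<nu> \<eta> * Pt N a b t \<eta> \<xi> = (\<Sum>k. \<nu> \<eta> * f \<eta> k)"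
      unfolding Pt_def f_def by simp
  qed
  also have "\<dots> = (\<Sum>k. \<Sum>\<eta>\<in>Omega N. \<nu> \<eta> * f \<eta> k)" by (rule suminf_sum[symmetric]) (rule sf)
  also have "(\<lambda>k. \<Sum>\<eta>\<in>Omega N. \<nu> \<eta> * f \<eta> k) = (\<lambda>k. if k = 0 then \<nu> \<xi> else 0)"
  proof
    fix k show "(\<Sum>\<eta>\<in>Omega N. \<nu> \<eta> * f \<eta> k) = (if k = 0 then \<nu> \<xi> else 0)"
    proof (cases k)
      case 0
      have "(\<Sum>\<eta>\<in>Omega N. \<nu> \<eta> * f \<eta> k) = (\<Sum>\<eta>\<in>Omega N. if \<eta> = \<xi> then \<nu> \<eta> else 0)"
        unfolding f_def 0 by (intro sum.cong refl) simp
      also have "\<dots> = \<nu> \<xi>" using assms(2) finite_Omega by simp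
      finally show ?thesis using 0 by simp
    next
      case (Suc j)
      have "(\<Sum>\<eta>\<in>Omega N. \<nu> \<eta> * f \<eta> k) = t^k / fact k * (\<Sum>\<eta>\<in>Omega N. \<nu> \<eta> * Qpow N a b (Suc j) \<eta> \<xi>)"
        unfolding f_def Suc by (simp add: sum_distrib_left algebra_simps)
      then show ?thesis using Qpow_stat[OF assms] Suc by simp
    qed
  qed
  also have "(\<Sum>k. (if k = 0 then \<nu> \<xi> else 0)) = \<nu> \<xi>"
    using sums_single[of 0 "\<lambda>_. \<nu> \<xi>"] by (simp add: sums_iff)
  finally show ?thesis .
qed

end

lemma num_bound: assumes "2 \<le> N" shows "real N ^ 3 * exp (-(2 * real N)) \<le> 1/2"
proof -
  have "(1 + 2 * real N / real (6::nat)) ^ 6 \<le> exp (2 * real N)"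
    by (rule exp_ge_one_plus_x_over_n_power_n) auto
  moreover have "(1 + 2 * real N / real (6::nat)) ^ 6 = ((3 + real N)^2)^3 / 729"
    by (simp add: field_simps power_mult[symmetric])
  moreover have "12 * real N \<le> (3 + real N)^2"
  proof -
    have "0 \<le> (real N - 3)^2" by simp
    then show ?thesis by (simp add: power2_eq_square algebra_simps)
  qed
  then have "(12 * real N)^3 \<le> ((3 + real N)^2)^3" by (intro power_mono) auto
  ultimately have "(12 * real N)^3 / 729 \<le> exp (2 * real N)" by simp
  moreover have "2 * real N ^ 3 \<le> (12 * real N)^3 / 729" by (simp add: power_mult_distrib)
  ultimately have "2 * real N ^ 3 \<le> exp (2 * real N)" by linarith
  then show ?thesis by (simp add: exp_minus field_simps)
qed

theorem mainTheorem11: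
  fixes N :: nat and \<alpha> \<beta> :: real and \<nu> :: "nat set \<Rightarrow> real"
  assumes "0 < \<alpha>" and "\<alpha> \<le> \<beta>" and "\<beta> < 1" and "N \<ge> 2"
    and "stationary N \<alpha> \<beta> \<nu>"
  shows "Tmix N \<alpha> \<beta> \<nu> \<le> 1/2 * real N ^ 3"
proof -
  interpret bd N \<alpha> \<beta> using assms by unfold_locales auto
  define t where "t = 1/2 * real N ^ 3"
  have t0: "0 < t" using assms(4) by (simp add: t_def)
  have st: "stationary N \<alpha> \<beta> \<nu>" by fact
  have nu0: "\<And>\<eta>. \<eta> \<in> Omega N \<Longrightarrow> 0 \<le> \<nu> \<eta>" and nu1: "(\<Sum>\<eta>\<in>Omega N. \<nu> \<eta>) = 1"
    using st unfolding stationary_def by auto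
  define B where "B = real N ^ 3 * exp (-(N/2*t) * (8 / real N ^ 3))"
  have B: "B \<le> 1/2"
  proof -
    have "-(N/2*t) * (8 / real N ^ 3) = -(2 * real N)" using assms(4) by (simp add: t_def field_simps)
    then show ?thesis using num_bound[OF assms(4)] by (simp add: B_def)
  qed
  have tv: "tv_dist N \<alpha> \<beta> \<nu> t \<eta> \<le> 1/4" if eta: "\<eta> \<in> Omega N" for \<eta>
  proof -
    have e: "Pt N \<alpha> \<beta> t \<eta> \<xi> - \<nu> \<xi> = (\<Sum>\<eta>'\<in>Omega N. \<nu> \<eta>' * (Pt N \<alpha> \<beta> t \<eta> \<xi> - Pt N \<alpha> \<beta> t \<eta>' \<xi>))"
      if "\<xi> \<in> Omega N" for \<xi>
    proof -
      have "(\<Sum>\<eta>'\<in>Omega N. \<nu> \<eta>' * (Pt N \<alpha> \<beta> t \<eta> \<xi> - Pt N \<alpha> \<beta> t \<eta>' \<xi>))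
          = (\<Sum>\<eta>'\<in>Omega N. \<nu> \<eta>') * Pt N \<alpha> \<beta> t \<eta> \<xi> - (\<Sum>\<eta>'\<in>Omega N. \<nu> \<eta>' * Pt N \<alpha> \<beta> t \<eta>' \<xi>)"
        by (simp add: right_diff_distrib sum_subtractf sum_distrib_right)
      also have "\<dots> = Pt N \<alpha> \<beta> t \<eta> \<xi> - \<nu> \<xi>" using Pt_stat[OF st that] nu1 by simp
      finally show ?thesis by simp
    qed
    have "(\<Sum>\<xi>\<in>Omega N. \<bar>Pt N \<alpha> \<beta> t \<eta> \<xi> - \<nu> \<xi>\<bar>)
        \<le> (\<Sum>\<xi>\<in>Omega N. \<Sum>\<eta>'\<in>Omega N. \<nu> \<eta>' * \<bar>Pt N \<alpha> \<beta> t \<eta> \<xi> - Pt N \<alpha> \<beta> t \<eta>' \<xi>\<bar>)"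
    proof (intro sum_mono)
      fix \<xi> assume "\<xi> \<in> Omega N"
      have "\<bar>Pt N \<alpha> \<beta> t \<eta> \<xi> - \<nu> \<xi>\<bar> \<le> (\<Sum>\<eta>'\<in>Omega N. \<bar>\<nu> \<eta>' * (Pt N \<alpha> \<beta> t \<eta> \<xi> - Pt N \<alpha> \<beta> t \<eta>' \<xi>)\<bar>)"
        unfolding e[OF \<open>\<xi> \<in> Omega N\<close>] by (rule sum_abs)
      also have "\<dots> = (\<Sum>\<eta>'\<in>Omega N. \<nu> \<eta>' * \<bar>Pt N \<alpha> \<beta> t \<eta> \<xi> - Pt N \<alpha> \<beta> t \<eta>' \<xi>\<bar>)"
        using nu0 by (intro sum.cong refl) (simp add: abs_mult)
      finally show "\<bar>Pt N \<alpha> \<beta> t \<eta> \<xi> - \<nu> \<xi>\<bar> \<le> \<dots>" .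
    qed
    also have "\<dots> = (\<Sum>\<eta>'\<in>Omega N. \<nu> \<eta>' * (\<Sum>\<xi>\<in>Omega N. \<bar>Pt N \<alpha> \<beta> t \<eta> \<xi> - Pt N \<alpha> \<beta> t \<eta>' \<xi>\<bar>))"
      by (subst sum.swap) (simp add: sum_distrib_left)
    also have "\<dots> \<le> (\<Sum>\<eta>'\<in>Omega N. \<nu> \<eta>' * B)"
      unfolding B_def using Pt_tv[OF eta _ less_imp_le[OF t0]] nu0
      by (intro sum_mono mult_left_mono) auto
    also have "\<dots> = B" using nu1 by (simp add: sum_distrib_right[symmetric])
    finally show ?thesis unfolding tv_dist_def using B by simp
  qed
  have mem: "t \<in> {t. t > 0 \<and> (\<forall>\<eta>\<in>Omega N. tv_dist N \<alpha> \<beta> \<nu> t \<eta> \<le> 1/4)}"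
    using t0 tv by auto
  have bdd: "bdd_below {t. t > 0 \<and> (\<forall>\<eta>\<in>Omega N. tv_dist N \<alpha> \<beta> \<nu> t \<eta> \<le> 1/4)}"
    by (rule bdd_belowI[of _ 0]) auto
  have "Tmix N \<alpha> \<beta> \<nu> \<le> t" unfolding Tmix_def by (rule cInf_lower[OF mem bdd])
  then show ?thesis by (simp add: t_def)
qed

end
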